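(* Let $\alpha>0$, $\beta>0$, and let $(X_t;t\geq0)$ be a non-trivial stochastically continuous $\alpha$-IDT process. Then $(X_t;t\geq0)$ is strictly $\beta$-stable if and only if it is $(\alpha/\beta)$-selfsimilar.
   Context: For $\alpha>0$, a stochastic process $X=(X_t;t\geq0)$ (real or $\mathbb{R}^d$-valued) is called an $\alpha$-IDT process if for every integer $n\geq1$, $(X_{n^{1/\alpha}t};t\geq0)\stackrel{(law)}{=}(X^{(1)}_t+\cdots+X^{(n)}_t;t\geq0)$, where $X^{(1)},\dots,X^{(n)}$ are independent copies of $X$; equality in law means equality of all finite-dimensional distributions. A process $X$ is strictly $\beta$-stable if for every integer $n\ge1$, $(X^{(1)}_t+\cdots+X^{(n)}_t;t\ge0)\stackrel{(law)}{=}(n^{1/\beta}X_t;t\ge0)$ with $X^{(j)}$ independent copies of $X$. A process $X$ is $H$-selfsimilar if for every $a>0$, $(X_{at};t\geq0)\stackrel{(law)}{=}(a^HX_t;t\ge0)$. Non-trivial means not almost surely identically zero. *)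

theory Defs
  imports "HOL-Probability.Probability"
begin

text \<open>A process is a family X t :: 'a => 'b of random variables on a probability
space M, indexed by real times t >= 0 (values at t < 0 are irrelevant).\<close>

definition fdd :: "'a measure \<Rightarrow> (real \<Rightarrow> 'a \<Rightarrow> 'b::topological_space) \<Rightarrow> real set
    \<Rightarrow> (real \<Rightarrow> 'b) measure" where
  "fdd M X T = distr M (PiM T (\<lambda>_. borel)) (\<lambda>\<omega>. \<lambda>t\<in>T. X t \<omega>)"

definition same_law :: "'a measure \<Rightarrow> (real \<Rightarrow> 'a \<Rightarrow> 'b::topological_space)
    \<Rightarrow> 'c measure \<Rightarrow> (real \<Rightarrow> 'c \<Rightarrow> 'b) \<Rightarrow> bool" where
  "same_law M X N Y \<longleftrightarrow> (\<forall>T. finite T \<and> T \<subseteq> {0..} \<longrightarrow> fdd M X T = fdd N Y T)"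

text \<open>n independent copies of X live on the product space of n copies of M;
  their sum X^(1)+...+X^(n) is the following process on that space.\<close>
definition copies_space :: "'a measure \<Rightarrow> nat \<Rightarrow> (nat \<Rightarrow> 'a) measure" where
  "copies_space M n = PiM {..<n} (\<lambda>_. M)"

definition copies_sum :: "(real \<Rightarrow> 'a \<Rightarrow> 'b::real_vector) \<Rightarrow> nat \<Rightarrow> real \<Rightarrow> (nat \<Rightarrow> 'a) \<Rightarrow> 'b" where
  "copies_sum X n t \<omega> = (\<Sum>j<n. X t (\<omega> j))"

definition is_process :: "'a measure \<Rightarrow> (real \<Rightarrow> 'a \<Rightarrow> 'b::topological_space) \<Rightarrow> bool" where
  "is_process M X \<longleftrightarrow> prob_space M \<and> (\<forall>t\<ge>0. X t \<in> borel_measurable M)"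

definition IDT :: "real \<Rightarrow> 'a measure \<Rightarrow> (real \<Rightarrow> 'a \<Rightarrow> 'b::{real_vector,topological_space}) \<Rightarrow> bool" where
  "IDT \<alpha> M X \<longleftrightarrow> (\<forall>n::nat. n \<ge> 1 \<longrightarrow>
     same_law M (\<lambda>t \<omega>. X (real n powr (1/\<alpha>) * t) \<omega>) (copies_space M n) (copies_sum X n))"

definition strictly_stable :: "real \<Rightarrow> 'a measure \<Rightarrow> (real \<Rightarrow> 'a \<Rightarrow> 'b::{real_vector,topological_space}) \<Rightarrow> bool" where
  "strictly_stable \<beta> M X \<longleftrightarrow> (\<forall>n::nat. n \<ge> 1 \<longrightarrow>
     same_law (copies_space M n) (copies_sum X n) M (\<lambda>t \<omega>. real n powr (1/\<beta>) *\<^sub>R X t \<omega>))"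

definition selfsimilar :: "real \<Rightarrow> 'a measure \<Rightarrow> (real \<Rightarrow> 'a \<Rightarrow> 'b::{real_vector,topological_space}) \<Rightarrow> bool" where
  "selfsimilar H M X \<longleftrightarrow> (\<forall>a::real. a > 0 \<longrightarrow>
     same_law M (\<lambda>t \<omega>. X (a * t) \<omega>) M (\<lambda>t \<omega>. a powr H *\<^sub>R X t \<omega>))"

definition stoch_continuous :: "'a measure \<Rightarrow> (real \<Rightarrow> 'a \<Rightarrow> 'b::metric_space) \<Rightarrow> bool" where
  "stoch_continuous M X \<longleftrightarrow> (\<forall>t\<ge>0. \<forall>e>0.
     ((\<lambda>s. measure M {\<omega>\<in>space M. dist (X s \<omega>) (X t \<omega>) > e}) \<longlongrightarrow> 0) (at t within {0..}))"

definition nontrivial :: "'a measure \<Rightarrow> (real \<Rightarrow> 'a \<Rightarrow> 'b::zero) \<Rightarrow> bool" where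
  "nontrivial M X \<longleftrightarrow> \<not> (AE \<omega> in M. \<forall>t\<ge>0. X t \<omega> = 0)"

end

theory Submission
  imports Defs
begin



lemma event_approx:
  fixes U V :: "real \<Rightarrow> 'a \<Rightarrow> 'b::euclidean_space"
  assumes P: "prob_space M" and T: "finite T"
    and mU: "\<And>t. t \<in> T \<Longrightarrow> U t \<in> borel_measurable M"
    and mV: "\<And>t. t \<in> T \<Longrightarrow> V t \<in> borel_measurable M"
    and C: "\<And>t. t \<in> T \<Longrightarrow> closed (C t)"
    and D: "\<And>t. t \<in> T \<Longrightarrow> closed (D t)"
    and CD: "\<And>t x y. t \<in> T \<Longrightarrow> x \<in> C t \<Longrightarrow> dist y x \<le> e \<Longrightarrow> y \<in> D t"
  shows "measure M {\<omega>\<in>space M. \<forall>t\<in>T. U t \<omega> \<in> C t}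
     \<le> measure M {\<omega>\<in>space M. \<forall>t\<in>T. V t \<omega> \<in> D t}
       + (\<Sum>t\<in>T. measure M {\<omega>\<in>space M. dist (V t \<omega>) (U t \<omega>) > e})"
proof -
  interpret prob_space M by fact
  have sC: "{\<omega>\<in>space M. U t \<omega> \<in> C t} \<in> sets M" if "t \<in> T" for t
    using measurable_sets[OF mU[OF that] borel_closed[OF C[OF that]]]
    by (simp add: vimage_def Int_def conj_commute)
  have sD: "{\<omega>\<in>space M. V t \<omega> \<in> D t} \<in> sets M" if "t \<in> T" for t
    using measurable_sets[OF mV[OF that] borel_closed[OF D[OF that]]]
    by (simp add: vimage_def Int_def conj_commute)
  have sE: "{\<omega>\<in>space M. dist (V t \<omega>) (U t \<omega>) > e} \<in> sets M" if "t \<in> T" for t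
    using mU[OF that] mV[OF that] by measurable
  have A: "{\<omega>\<in>space M. \<forall>t\<in>T. U t \<omega> \<in> C t} \<in> sets M"
    using sets.sets_Collect_finite_All[OF sC T] by simp
  have B: "{\<omega>\<in>space M. \<forall>t\<in>T. V t \<omega> \<in> D t} \<in> sets M"
    using sets.sets_Collect_finite_All[OF sD T] by simp
  have sub: "{\<omega>\<in>space M. \<forall>t\<in>T. U t \<omega> \<in> C t} \<subseteq>
     {\<omega>\<in>space M. \<forall>t\<in>T. V t \<omega> \<in> D t} \<union> (\<Union>t\<in>T. {\<omega>\<in>space M. dist (V t \<omega>) (U t \<omega>) > e})"
    using CD by (auto simp: not_less)
  have "measure M {\<omega>\<in>space M. \<forall>t\<in>T. U t \<omega> \<in> C t} \<le>
     measure M ({\<omega>\<in>space M. \<forall>t\<in>T. V t \<omega> \<in> D t} \<union> (\<Union>t\<in>T. {\<omega>\<in>space M. dist (V t \<omega>) (U t \<omega>) > e}))"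
    using sub B sE T by (intro finite_measure_mono sets.Un sets.finite_UN) auto
  also have "\<dots> \<le> measure M {\<omega>\<in>space M. \<forall>t\<in>T. V t \<omega> \<in> D t} + measure M (\<Union>t\<in>T. {\<omega>\<in>space M. dist (V t \<omega>) (U t \<omega>) > e})"
    using B sE T by (intro measure_Un_le sets.finite_UN) auto
  also have "measure M (\<Union>t\<in>T. {\<omega>\<in>space M. dist (V t \<omega>) (U t \<omega>) > e}) \<le> (\<Sum>t\<in>T. measure M {\<omega>\<in>space M. dist (V t \<omega>) (U t \<omega>) > e})"
    using sE T by (intro measure_subadditive_finite) auto
  finally show ?thesis by simp
qed



lemma fdd_emeasure:
  fixes V :: "real \<Rightarrow> 'a \<Rightarrow> 'b::euclidean_space"
  assumes T: "finite T" and mV: "\<And>t. t \<in> T \<Longrightarrow> V t \<in> borel_measurable M"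
    and D: "\<And>t. t \<in> T \<Longrightarrow> D t \<in> sets borel"
  shows "emeasure (fdd M V T) (Pi\<^sub>E T D) = emeasure M {\<omega>\<in>space M. \<forall>t\<in>T. V t \<omega> \<in> D t}"
proof -
  have m: "(\<lambda>\<omega>. \<lambda>t\<in>T. V t \<omega>) \<in> M \<rightarrow>\<^sub>M PiM T (\<lambda>_. borel)"
    using mV by (intro measurable_restrict) auto
  have s: "Pi\<^sub>E T D \<in> sets (PiM T (\<lambda>_. borel))"
    using T D by (intro sets_PiM_I_finite) auto
  show ?thesis unfolding fdd_def
    by (subst emeasure_distr[OF m s]) (auto simp: restrict_PiE_iff intro!: arg_cong[where f="emeasure M"])
qed

lemma fdd_measure:
  fixes V :: "real \<Rightarrow> 'a \<Rightarrow> 'b::euclidean_space"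
  assumes T: "finite T" and mV: "\<And>t. t \<in> T \<Longrightarrow> V t \<in> borel_measurable M"
    and D: "\<And>t. t \<in> T \<Longrightarrow> D t \<in> sets borel"
  shows "measure (fdd M V T) (Pi\<^sub>E T D) = measure M {\<omega>\<in>space M. \<forall>t\<in>T. V t \<omega> \<in> D t}"
  using fdd_emeasure[OF assms] by (simp add: measure_def)



lemma half_le:
  fixes V :: "nat \<Rightarrow> real \<Rightarrow> 'a \<Rightarrow> 'b::euclidean_space" and U :: "real \<Rightarrow> 'a \<Rightarrow> 'b"
    and W :: "nat \<Rightarrow> real \<Rightarrow> 'c \<Rightarrow> 'b" and Z :: "real \<Rightarrow> 'c \<Rightarrow> 'b"
  assumes PM: "prob_space M" and PN: "prob_space N" and T: "finite T"
    and mV: "\<And>k t. t \<in> T \<Longrightarrow> V k t \<in> borel_measurable M"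
    and mU: "\<And>t. t \<in> T \<Longrightarrow> U t \<in> borel_measurable M"
    and mW: "\<And>k t. t \<in> T \<Longrightarrow> W k t \<in> borel_measurable N"
    and mZ: "\<And>t. t \<in> T \<Longrightarrow> Z t \<in> borel_measurable N"
    and cV: "\<And>t e. t \<in> T \<Longrightarrow> e > 0 \<Longrightarrow>
        (\<lambda>k. measure M {\<omega>\<in>space M. dist (V k t \<omega>) (U t \<omega>) > e}) \<longlonglongrightarrow> 0"
    and cW: "\<And>t e. t \<in> T \<Longrightarrow> e > 0 \<Longrightarrow>
        (\<lambda>k. measure N {\<omega>\<in>space N. dist (W k t \<omega>) (Z t \<omega>) > e}) \<longlonglongrightarrow> 0"
    and eq: "\<And>k. fdd M (V k) T = fdd N (W k) T"
    and C: "\<And>t. t \<in> T \<Longrightarrow> closed (C t)" and Cne: "\<And>t. t \<in> T \<Longrightarrow> C t \<noteq> {}"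
  shows "measure M {\<omega>\<in>space M. \<forall>t\<in>T. U t \<omega> \<in> C t} \<le> measure N {\<omega>\<in>space N. \<forall>t\<in>T. Z t \<omega> \<in> C t}"
proof -
  interpret N: prob_space N by fact
  define Ce where "Ce e t = {x. infdist x (C t) \<le> e}" for e t
  have cl: "closed (Ce e t)" for e t
    unfolding Ce_def by (intro closed_Collect_le continuous_intros)
  define p where "p = measure M {\<omega>\<in>space M. \<forall>t\<in>T. U t \<omega> \<in> C t}"
  define r where "r e k = (\<Sum>t\<in>T. measure M {\<omega>\<in>space M. dist (V k t \<omega>) (U t \<omega>) > e})
     + (\<Sum>t\<in>T. measure N {\<omega>\<in>space N. dist (W k t \<omega>) (Z t \<omega>) > e})" for e k
  have key: "p \<le> measure N {\<omega>\<in>space N. \<forall>t\<in>T. Z t \<omega> \<in> Ce (2*e) t} + r e k" if e: "e > 0" for e k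
  proof -
    have 1: "p \<le> measure M {\<omega>\<in>space M. \<forall>t\<in>T. V k t \<omega> \<in> Ce e t}
       + (\<Sum>t\<in>T. measure M {\<omega>\<in>space M. dist (V k t \<omega>) (U t \<omega>) > e})"
      unfolding p_def
    proof (rule event_approx[OF PM T mU mV C cl])
      fix t x y assume "t \<in> T" "x \<in> C t" "dist y x \<le> e"
      then show "y \<in> Ce e t" unfolding Ce_def
        using infdist_triangle[of y "C t" x] by simp
    qed
    have 2: "measure M {\<omega>\<in>space M. \<forall>t\<in>T. V k t \<omega> \<in> Ce e t} = measure N {\<omega>\<in>space N. \<forall>t\<in>T. W k t \<omega> \<in> Ce e t}"
      using fdd_measure[where V="V k" and M=M and D="Ce e", OF T mV] fdd_measure[where V="W k" and M=N and D="Ce e", OF T mW] eq[of k] cl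
      by (simp add: borel_closed)
    have 3: "measure N {\<omega>\<in>space N. \<forall>t\<in>T. W k t \<omega> \<in> Ce e t} \<le> measure N {\<omega>\<in>space N. \<forall>t\<in>T. Z t \<omega> \<in> Ce (2*e) t}
       + (\<Sum>t\<in>T. measure N {\<omega>\<in>space N. dist (Z t \<omega>) (W k t \<omega>) > e})"
    proof (rule event_approx[OF PN T mW mZ cl cl])
      fix t x y assume "t \<in> T" "x \<in> Ce e t" "dist y x \<le> e"
      then show "y \<in> Ce (2*e) t" unfolding Ce_def
        using infdist_triangle[of y "C t" x] by simp
    qed
    show ?thesis using 1 2 3 unfolding r_def by (simp add: dist_commute)
  qed
  have rlim: "(\<lambda>k. r e k) \<longlonglongrightarrow> 0" if "e > 0" for e
  proof -
    have "(\<lambda>k. r e k) \<longlonglongrightarrow> (\<Sum>t\<in>T. 0) + (\<Sum>t\<in>T. 0)"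
      unfolding r_def using that by (intro tendsto_add tendsto_sum cV cW) auto
    then show ?thesis by simp
  qed
  have le2: "p \<le> measure N {\<omega>\<in>space N. \<forall>t\<in>T. Z t \<omega> \<in> Ce (2*e) t}" if "e > 0" for e
  proof (rule LIMSEQ_le_const)
    show "(\<lambda>k. measure N {\<omega>\<in>space N. \<forall>t\<in>T. Z t \<omega> \<in> Ce (2*e) t} + r e k) \<longlonglongrightarrow>
        measure N {\<omega>\<in>space N. \<forall>t\<in>T. Z t \<omega> \<in> Ce (2*e) t}"
      using tendsto_add[OF tendsto_const rlim[OF that]] by simp
    show "\<exists>K. \<forall>n\<ge>K. p \<le> measure N {\<omega>\<in>space N. \<forall>t\<in>T. Z t \<omega> \<in> Ce (2*e) t} + r e n"
      using key[OF that] by auto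
  qed
  define A where "A j = {\<omega>\<in>space N. \<forall>t\<in>T. Z t \<omega> \<in> Ce (1 / real (Suc j)) t}" for j
  have Ameas: "A j \<in> sets N" for j
  proof -
    have "{\<omega>\<in>space N. Z t \<omega> \<in> Ce (1 / real (Suc j)) t} \<in> sets N" if "t \<in> T" for t
      using measurable_sets[OF mZ[OF that] borel_closed[OF cl]]
      by (simp add: vimage_def Int_def conj_commute)
    then show ?thesis unfolding A_def by (rule sets.sets_Collect_finite_All[OF _ T])
  qed
  have dec: "decseq A"
  proof (rule decseq_SucI)
    fix j
    have "1 / real (Suc (Suc j)) \<le> 1 / real (Suc j)" by (simp add: frac_le)
    then show "A (Suc j) \<subseteq> A j" unfolding A_def Ce_def by auto
  qed
  have inter: "(\<Inter>j. A j) = {\<omega>\<in>space N. \<forall>t\<in>T. Z t \<omega> \<in> C t}"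
  proof (intro set_eqI iffI)
    fix \<omega> assume "\<omega> \<in> (\<Inter>j. A j)"
    then have sp: "\<omega> \<in> space N" and h: "\<And>j t. t \<in> T \<Longrightarrow> infdist (Z t \<omega>) (C t) \<le> 1 / real (Suc j)"
      unfolding A_def Ce_def by auto
    have "infdist (Z t \<omega>) (C t) = 0" if "t \<in> T" for t
    proof (rule ccontr)
      assume "infdist (Z t \<omega>) (C t) \<noteq> 0"
      then have "infdist (Z t \<omega>) (C t) > 0" using infdist_nonneg[of "Z t \<omega>" "C t"] by linarith
      then obtain n where "inverse (real (Suc n)) < infdist (Z t \<omega>) (C t)"
        using reals_Archimedean by blast
      with h[OF that, of n] show False by (simp add: divide_inverse)
    qed
    then show "\<omega> \<in> {\<omega>\<in>space N. \<forall>t\<in>T. Z t \<omega> \<in> C t}"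
      using sp in_closed_iff_infdist_zero[OF C Cne] by auto
  next
    fix \<omega> assume "\<omega> \<in> {\<omega>\<in>space N. \<forall>t\<in>T. Z t \<omega> \<in> C t}"
    then show "\<omega> \<in> (\<Inter>j. A j)" unfolding A_def Ce_def by auto
  qed
  have lim: "(\<lambda>j. measure N (A j)) \<longlonglongrightarrow> measure N {\<omega>\<in>space N. \<forall>t\<in>T. Z t \<omega> \<in> C t}"
    using N.finite_Lim_measure_decseq[of A] Ameas dec inter by auto
  have "p \<le> measure N (A j)" for j
  proof -
    have "p \<le> measure N {\<omega>\<in>space N. \<forall>t\<in>T. Z t \<omega> \<in> Ce (2*(1 / (2 * real (Suc j)))) t}"
      by (rule le2) simp
    moreover have "2*(1 / (2 * real (Suc j))) = 1 / real (Suc j)" by (simp add: field_simps)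
    ultimately show ?thesis unfolding A_def by metis
  qed
  then have "p \<le> measure N {\<omega>\<in>space N. \<forall>t\<in>T. Z t \<omega> \<in> C t}"
    by (intro LIMSEQ_le_const[OF lim]) auto
  then show ?thesis unfolding p_def .
qed



lemma limit_law:
  fixes V :: "nat \<Rightarrow> real \<Rightarrow> 'a \<Rightarrow> 'b::euclidean_space" and U :: "real \<Rightarrow> 'a \<Rightarrow> 'b"
    and W :: "nat \<Rightarrow> real \<Rightarrow> 'c \<Rightarrow> 'b" and Z :: "real \<Rightarrow> 'c \<Rightarrow> 'b"
  assumes PM: "prob_space M" and PN: "prob_space N" and T: "finite T"
    and mV: "\<And>k t. t \<in> T \<Longrightarrow> V k t \<in> borel_measurable M"
    and mU: "\<And>t. t \<in> T \<Longrightarrow> U t \<in> borel_measurable M"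
    and mW: "\<And>k t. t \<in> T \<Longrightarrow> W k t \<in> borel_measurable N"
    and mZ: "\<And>t. t \<in> T \<Longrightarrow> Z t \<in> borel_measurable N"
    and cV: "\<And>t e. t \<in> T \<Longrightarrow> e > 0 \<Longrightarrow>
        (\<lambda>k. measure M {\<omega>\<in>space M. dist (V k t \<omega>) (U t \<omega>) > e}) \<longlonglongrightarrow> 0"
    and cW: "\<And>t e. t \<in> T \<Longrightarrow> e > 0 \<Longrightarrow>
        (\<lambda>k. measure N {\<omega>\<in>space N. dist (W k t \<omega>) (Z t \<omega>) > e}) \<longlonglongrightarrow> 0"
    and eq: "\<And>k. fdd M (V k) T = fdd N (W k) T"
  shows "fdd M U T = fdd N Z T"
proof -
  interpret M: prob_space M by fact
  interpret N: prob_space N by fact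
  define \<Omega> where "\<Omega> = Pi\<^sub>E T (\<lambda>_. UNIV :: 'b set)"
  define G where "G = {{f\<in>\<Omega>. \<forall>i\<in>j. f i \<in> A i} | A j. j \<in> {T} \<and> A \<in> Pi j (\<lambda>_. Collect closed)}"
  have G_sub: "G \<subseteq> Pow \<Omega>" unfolding G_def by auto
  have sPi: "sets (PiM T (\<lambda>_. borel :: 'b measure)) = sigma_sets \<Omega> G"
  proof -
    have "sets (PiM T (\<lambda>_. sigma (UNIV :: 'b set) (Collect closed))) = sets (sigma (Pi\<^sub>E T (\<lambda>_. UNIV :: 'b set)) G)"
      unfolding G_def \<Omega>_def
      by (rule sets_PiM_sigma) (auto intro!: exI[of _ "{UNIV}"] simp: T)
    then show ?thesis
      using G_sub unfolding borel_eq_closed[symmetric] \<Omega>_def by simp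
  qed
  have mUr: "(\<lambda>\<omega>. \<lambda>t\<in>T. U t \<omega>) \<in> M \<rightarrow>\<^sub>M PiM T (\<lambda>_. borel)"
    using mU by (intro measurable_restrict) auto
  have mZr: "(\<lambda>\<omega>. \<lambda>t\<in>T. Z t \<omega>) \<in> N \<rightarrow>\<^sub>M PiM T (\<lambda>_. borel)"
    using mZ by (intro measurable_restrict) auto
  have PU: "prob_space (fdd M U T)" unfolding fdd_def using M.prob_space_distr[OF mUr] .
  show ?thesis
  proof (rule measure_eqI_generator_eq[where \<Omega>=\<Omega> and E=G and A="\<lambda>_. \<Omega>"])
    show "Int_stable G"
    proof (rule Int_stableI)
      fix a b assume "a \<in> G" "b \<in> G"
      then obtain A B where a: "a = {f\<in>\<Omega>. \<forall>i\<in>T. f i \<in> A i}" "A \<in> Pi T (\<lambda>_. Collect closed)"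
        and b: "b = {f\<in>\<Omega>. \<forall>i\<in>T. f i \<in> B i}" "B \<in> Pi T (\<lambda>_. Collect closed)"
        unfolding G_def by auto
      have "a \<inter> b = {f\<in>\<Omega>. \<forall>i\<in>T. f i \<in> (\<lambda>i. A i \<inter> B i) i}" using a b by auto
      moreover have "(\<lambda>i. A i \<inter> B i) \<in> Pi T (\<lambda>_. Collect closed)" using a b by (auto intro: closed_Int)
      ultimately show "a \<inter> b \<in> G" unfolding G_def
        by (intro CollectI exI[where x="\<lambda>i. A i \<inter> B i"] exI[where x=T] conjI) auto
    qed
    show "G \<subseteq> Pow \<Omega>" by (rule G_sub)
    show "sets (fdd M U T) = sigma_sets \<Omega> G" unfolding fdd_def using sPi by simp
    show "sets (fdd N Z T) = sigma_sets \<Omega> G" unfolding fdd_def using sPi by simp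
    show "range (\<lambda>_. \<Omega>) \<subseteq> G" unfolding G_def
      by (auto intro!: exI[of _ "\<lambda>_. UNIV"] exI[of _ T])
    show "(\<Union>i. \<Omega>) = \<Omega>" by simp
    show "emeasure (fdd M U T) \<Omega> \<noteq> \<infinity>" for i::nat
      using prob_space.emeasure_le_1[OF PU, of \<Omega>] by (auto simp: top_unique)
    fix X assume "X \<in> G"
    then obtain A where X: "X = {f\<in>\<Omega>. \<forall>i\<in>T. f i \<in> A i}" and A: "\<And>t. t \<in> T \<Longrightarrow> closed (A t)"
      unfolding G_def by auto
    have XP: "X = Pi\<^sub>E T A" unfolding X \<Omega>_def by (auto simp: PiE_def Pi_def)
    have AB: "\<And>t. t \<in> T \<Longrightarrow> A t \<in> sets borel" using A by (simp add: borel_closed)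
    show "emeasure (fdd M U T) X = emeasure (fdd N Z T) X"
    proof (cases "\<exists>t\<in>T. A t = {}")
      case True
      then have "X = {}" unfolding XP by auto
      then show ?thesis by simp
    next
      case False
      then have ne: "\<And>t. t \<in> T \<Longrightarrow> A t \<noteq> {}" by auto
      have le1: "measure M {\<omega>\<in>space M. \<forall>t\<in>T. U t \<omega> \<in> A t} \<le> measure N {\<omega>\<in>space N. \<forall>t\<in>T. Z t \<omega> \<in> A t}"
        by (rule half_le[OF PM PN T mV mU mW mZ cV cW eq A ne])
      have le2: "measure N {\<omega>\<in>space N. \<forall>t\<in>T. Z t \<omega> \<in> A t} \<le> measure M {\<omega>\<in>space M. \<forall>t\<in>T. U t \<omega> \<in> A t}"
        by (rule half_le[OF PN PM T mW mZ mV mU cW cV eq[symmetric] A ne])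
      have "emeasure (fdd M U T) X = emeasure M {\<omega>\<in>space M. \<forall>t\<in>T. U t \<omega> \<in> A t}"
        unfolding XP by (rule fdd_emeasure[OF T mU AB])
      also have "\<dots> = ennreal (measure M {\<omega>\<in>space M. \<forall>t\<in>T. U t \<omega> \<in> A t})"
        by (simp add: M.emeasure_eq_measure)
      also have "\<dots> = ennreal (measure N {\<omega>\<in>space N. \<forall>t\<in>T. Z t \<omega> \<in> A t})"
        using le1 le2 by simp
      also have "\<dots> = emeasure N {\<omega>\<in>space N. \<forall>t\<in>T. Z t \<omega> \<in> A t}"
        by (simp add: N.emeasure_eq_measure)
      also have "\<dots> = emeasure (fdd N Z T) X"
        unfolding XP by (rule fdd_emeasure[OF T mZ AB, symmetric])
      finally show ?thesis .
    qed
  qed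
qed



lemma same_law_sym: "same_law M X N Y \<Longrightarrow> same_law N Y M X"
  unfolding same_law_def by auto

lemma same_law_trans: "same_law M X N Y \<Longrightarrow> same_law N Y L Z \<Longrightarrow> same_law M X L Z"
  unfolding same_law_def by auto

lemma fdd_map:
  fixes X :: "real \<Rightarrow> 'a \<Rightarrow> 'b::euclidean_space" and f :: "'b \<Rightarrow> 'b"
  assumes mX: "\<And>s. s \<in> \<phi> ` T \<Longrightarrow> X s \<in> borel_measurable M"
    and f: "f \<in> borel_measurable borel"
  shows "fdd M (\<lambda>t \<omega>. f (X (\<phi> t) \<omega>)) T
     = distr (fdd M X (\<phi> ` T)) (PiM T (\<lambda>_. borel)) (\<lambda>h. \<lambda>t\<in>T. f (h (\<phi> t)))"
proof -
  have mXr: "(\<lambda>\<omega>. \<lambda>t\<in>\<phi> ` T. X t \<omega>) \<in> M \<rightarrow>\<^sub>M PiM (\<phi> ` T) (\<lambda>_. borel)"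
    using mX by (intro measurable_restrict) auto
  have mg: "(\<lambda>h. \<lambda>t\<in>T. f (h (\<phi> t))) \<in> PiM (\<phi> ` T) (\<lambda>_. borel) \<rightarrow>\<^sub>M PiM T (\<lambda>_. borel)"
  proof (intro measurable_restrict)
    fix t assume "t \<in> T"
    then have "(\<lambda>h. h (\<phi> t)) \<in> PiM (\<phi> ` T) (\<lambda>_. borel) \<rightarrow>\<^sub>M (borel :: 'b measure)"
      by (intro measurable_component_singleton) auto
    then show "(\<lambda>h. f (h (\<phi> t))) \<in> PiM (\<phi> ` T) (\<lambda>_. borel) \<rightarrow>\<^sub>M borel"
      using f by (rule measurable_compose)
  qed
  show ?thesis unfolding fdd_def
    by (subst distr_distr[OF mg mXr]) (auto intro!: distr_cong simp: comp_def)
qed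

lemma same_law_map:
  fixes X :: "real \<Rightarrow> 'a \<Rightarrow> 'b::euclidean_space" and Y :: "real \<Rightarrow> 'c \<Rightarrow> 'b" and f :: "'b \<Rightarrow> 'b"
  assumes s: "same_law M X N Y"
    and mX: "\<And>t. t \<ge> 0 \<Longrightarrow> X t \<in> borel_measurable M"
    and mY: "\<And>t. t \<ge> 0 \<Longrightarrow> Y t \<in> borel_measurable N"
    and \<phi>: "\<And>t. t \<ge> 0 \<Longrightarrow> \<phi> t \<ge> 0"
    and f: "f \<in> borel_measurable borel"
  shows "same_law M (\<lambda>t \<omega>. f (X (\<phi> t) \<omega>)) N (\<lambda>t \<omega>. f (Y (\<phi> t) \<omega>))"
  unfolding same_law_def
proof (intro allI impI)
  fix T :: "real set" assume T: "finite T \<and> T \<subseteq> {0..}"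
  then have sub: "\<phi> ` T \<subseteq> {0..}" using \<phi> by auto
  have e: "fdd M X (\<phi> ` T) = fdd N Y (\<phi> ` T)"
    using s T sub unfolding same_law_def by auto
  show "fdd M (\<lambda>t \<omega>. f (X (\<phi> t) \<omega>)) T = fdd N (\<lambda>t \<omega>. f (Y (\<phi> t) \<omega>)) T"
  proof -
    have 1: "fdd M (\<lambda>t \<omega>. f (X (\<phi> t) \<omega>)) T = distr (fdd M X (\<phi> ` T)) (PiM T (\<lambda>_. borel)) (\<lambda>h. \<lambda>t\<in>T. f (h (\<phi> t)))"
      using sub by (intro fdd_map mX f) auto
    have 2: "fdd N (\<lambda>t \<omega>. f (Y (\<phi> t) \<omega>)) T = distr (fdd N Y (\<phi> ` T)) (PiM T (\<lambda>_. borel)) (\<lambda>h. \<lambda>t\<in>T. f (h (\<phi> t)))"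
      using sub by (intro fdd_map mY f) auto
    show ?thesis using 1 2 e by simp
  qed
qed

lemma tight_scale:
  fixes Y :: "'a \<Rightarrow> 'b::euclidean_space" and c :: "nat \<Rightarrow> real"
  assumes P: "prob_space M" and Y: "Y \<in> borel_measurable M" and c: "c \<longlonglongrightarrow> c0" and e: "e > 0"
  shows "(\<lambda>k. measure M {\<omega>\<in>space M. dist (c k *\<^sub>R Y \<omega>) (c0 *\<^sub>R Y \<omega>) > e}) \<longlonglongrightarrow> 0"
proof (rule LIMSEQ_I)
  interpret prob_space M by fact
  fix r :: real assume r: "r > 0"
  define B where "B j = {\<omega>\<in>space M. norm (Y \<omega>) > real j}" for j
  have Bs: "B j \<in> sets M" for j unfolding B_def using Y by measurable
  have dec: "decseq B" unfolding B_def decseq_def by auto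
  have "(\<Inter>j. B j) = {}"
  proof (safe)
    fix \<omega> assume "\<omega> \<in> (\<Inter>j. B j)"
    then have "norm (Y \<omega>) > real (nat \<lceil>norm (Y \<omega>)\<rceil>)" unfolding B_def by blast
    moreover have "real (nat \<lceil>norm (Y \<omega>)\<rceil>) \<ge> norm (Y \<omega>)"
      by (metis le_nat_iff of_nat_le_iff real_nat_ceiling_ge)
    ultimately show "\<omega> \<in> {}" by linarith
  qed
  then have "(\<lambda>j. measure M (B j)) \<longlonglongrightarrow> 0"
    using finite_Lim_measure_decseq[of B] Bs dec by auto
  then obtain j where j: "measure M (B j) < r"
    using r by (auto dest!: LIMSEQ_D)
  have "(\<lambda>k. c k - c0) \<longlonglongrightarrow> 0" using c by (simp add: LIM_zero)
  then obtain K where K: "\<And>k. k \<ge> K \<Longrightarrow> norm (c k - c0) < e / (real j + 1)"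
    using e by (fastforce dest!: LIMSEQ_D[of _ 0 "e / (real j + 1)"])
  show "\<exists>K. \<forall>k\<ge>K. norm (measure M {\<omega>\<in>space M. dist (c k *\<^sub>R Y \<omega>) (c0 *\<^sub>R Y \<omega>) > e} - 0) < r"
  proof (intro exI allI impI)
    fix k assume k: "k \<ge> K"
    have sub: "{\<omega>\<in>space M. dist (c k *\<^sub>R Y \<omega>) (c0 *\<^sub>R Y \<omega>) > e} \<subseteq> B j"
    proof
      fix \<omega> assume "\<omega> \<in> {\<omega>\<in>space M. dist (c k *\<^sub>R Y \<omega>) (c0 *\<^sub>R Y \<omega>) > e}"
      then have sp: "\<omega> \<in> space M" and d: "\<bar>c k - c0\<bar> * norm (Y \<omega>) > e"
        by (auto simp: dist_norm scaleR_diff_left[symmetric])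
      have ck: "\<bar>c k - c0\<bar> < e / (real j + 1)" using K[OF k] by simp
      show "\<omega> \<in> B j"
      proof (rule ccontr)
        assume "\<omega> \<notin> B j"
        then have n: "norm (Y \<omega>) \<le> real j" using sp unfolding B_def by auto
        have "\<bar>c k - c0\<bar> * norm (Y \<omega>) \<le> e / (real j + 1) * real j"
          using ck n by (intro mult_mono) auto
        also have "\<dots> \<le> e" using e by (simp add: field_simps)
        finally show False using d by simp
      qed
    qed
    have "measure M {\<omega>\<in>space M. dist (c k *\<^sub>R Y \<omega>) (c0 *\<^sub>R Y \<omega>) > e} \<le> measure M (B j)"
      using sub Bs by (intro finite_measure_mono) auto
    then show "norm (measure M {\<omega>\<in>space M. dist (c k *\<^sub>R Y \<omega>) (c0 *\<^sub>R Y \<omega>) > e} - 0) < r"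
      using j by simp
  qed
qed



theorem mainTheorem3:
  fixes M :: "'a measure" and X :: "real \<Rightarrow> 'a \<Rightarrow> 'b::euclidean_space"
    and \<alpha> \<beta> :: real
  assumes "\<alpha> > 0" and "\<beta> > 0"
    and "is_process M X"
    and "nontrivial M X"
    and "stoch_continuous M X"
    and "IDT \<alpha> M X"
  shows "strictly_stable \<beta> M X \<longleftrightarrow> selfsimilar (\<alpha> / \<beta>) M X"
proof -
  note al = assms(1) and be = assms(2)
  have P: "prob_space M" and mX: "\<And>t. t \<ge> 0 \<Longrightarrow> X t \<in> borel_measurable M"
    using assms(3) unfolding is_process_def by auto
  have IDTn: "\<And>n::nat. n \<ge> 1 \<Longrightarrow> same_law M (\<lambda>t \<omega>. X (real n powr (1/\<alpha>) * t) \<omega>) (copies_space M n) (copies_sum X n)"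
    using assms(6) unfolding IDT_def by auto
  have mXs: "(\<lambda>\<omega>. X (c * t) \<omega>) \<in> borel_measurable M" if "c \<ge> 0" "t \<ge> 0" for c t
    using mX that by simp
  have mXr: "(\<lambda>\<omega>. r *\<^sub>R X t \<omega>) \<in> borel_measurable M" if "t \<ge> 0" for r t
    using mX[OF that] by measurable
  show ?thesis
  proof
    assume st: "strictly_stable \<beta> M X"
    have S: "same_law M (\<lambda>t \<omega>. X (real n powr (1/\<alpha>) * t) \<omega>) M (\<lambda>t \<omega>. real n powr (1/\<beta>) *\<^sub>R X t \<omega>)"
      if n: "n \<ge> 1" for n :: nat
      using same_law_trans[OF IDTn[OF n]] st n unfolding strictly_stable_def by auto
    have Q: "same_law M (\<lambda>t \<omega>. X ((real n / real m) powr (1/\<alpha>) * t) \<omega>) M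
        (\<lambda>t \<omega>. (real n / real m) powr (1/\<beta>) *\<^sub>R X t \<omega>)"
      if n: "n \<ge> 1" and m: "m \<ge> 1" for n m :: nat
    proof -
      define a where "a = (real n / real m) powr (1/\<alpha>)"
      have a0: "a \<ge> 0" unfolding a_def by simp
      have h1: "same_law M (\<lambda>t \<omega>. (\<lambda>x. x) ((\<lambda>t \<omega>. X (real m powr (1/\<alpha>) * t) \<omega>) ((\<lambda>t. a * t) t) \<omega>))
          M (\<lambda>t \<omega>. (\<lambda>x. x) ((\<lambda>t \<omega>. real m powr (1/\<beta>) *\<^sub>R X t \<omega>) ((\<lambda>t. a * t) t) \<omega>))"
        by (rule same_law_map[OF S[OF m]]) (use mXs mXr a0 in auto)
      have e1: "real m powr (1/\<alpha>) * (a * t) = real n powr (1/\<alpha>) * t" for t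
      proof -
        have "real m powr (1/\<alpha>) * a = (real m * (real n / real m)) powr (1/\<alpha>)"
          unfolding a_def by (subst powr_mult) auto
        also have "real m * (real n / real m) = real n" using m by simp
        finally show ?thesis by (simp add: mult.assoc[symmetric])
      qed
      have h2: "same_law M (\<lambda>t \<omega>. X (real n powr (1/\<alpha>) * t) \<omega>) M (\<lambda>t \<omega>. real m powr (1/\<beta>) *\<^sub>R X (a * t) \<omega>)"
        using h1 by (simp add: e1)
      have h3: "same_law M (\<lambda>t \<omega>. real m powr (1/\<beta>) *\<^sub>R X (a * t) \<omega>) M (\<lambda>t \<omega>. real n powr (1/\<beta>) *\<^sub>R X t \<omega>)"
        by (rule same_law_trans[OF same_law_sym[OF h2] S[OF n]])
      define c where "c = inverse (real m powr (1/\<beta>))"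
      have h4: "same_law M (\<lambda>t \<omega>. (\<lambda>x. c *\<^sub>R x) ((\<lambda>t \<omega>. real m powr (1/\<beta>) *\<^sub>R X (a * t) \<omega>) ((\<lambda>t. t) t) \<omega>))
          M (\<lambda>t \<omega>. (\<lambda>x. c *\<^sub>R x) ((\<lambda>t \<omega>. real n powr (1/\<beta>) *\<^sub>R X t \<omega>) ((\<lambda>t. t) t) \<omega>))"
        by (rule same_law_map[OF h3]) (use mXs mXr a0 in auto)
      have c1: "c * real m powr (1/\<beta>) = 1" unfolding c_def using m by simp
      have c2: "c * real n powr (1/\<beta>) = (real n / real m) powr (1/\<beta>)"
        unfolding c_def by (subst powr_divide) (auto simp: divide_inverse mult.commute)
      have "same_law M (\<lambda>t \<omega>. X (a * t) \<omega>) M (\<lambda>t \<omega>. (real n / real m) powr (1/\<beta>) *\<^sub>R X t \<omega>)"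
        using h4 by (simp add: c1 c2 mult.assoc[symmetric])
      then show ?thesis unfolding a_def .
    qed
    show "selfsimilar (\<alpha> / \<beta>) M X" unfolding selfsimilar_def
    proof (intro allI impI)
      fix a :: real assume a: "a > 0"
      show "same_law M (\<lambda>t \<omega>. X (a * t) \<omega>) M (\<lambda>t \<omega>. a powr (\<alpha> / \<beta>) *\<^sub>R X t \<omega>)"
        unfolding same_law_def
      proof (intro allI impI)
        fix T :: "real set" assume T: "finite T \<and> T \<subseteq> {0..}"
        define nn where "nn k = nat \<lceil>a powr \<alpha> * real (Suc k)\<rceil>" for k
        define q where "q k = real (nn k) / real (Suc k)" for k
        have apos: "a powr \<alpha> > 0" using a by simp
        have nn1: "nn k \<ge> 1" for k
        proof -
          have "a powr \<alpha> * real (Suc k) > 0" using apos by simp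
          then show ?thesis unfolding nn_def by linarith
        qed
        have qb: "a powr \<alpha> \<le> q k \<and> q k \<le> a powr \<alpha> + inverse (real (Suc k))" for k
        proof -
          have r: "real (nn k) = of_int \<lceil>a powr \<alpha> * real (Suc k)\<rceil>"
            unfolding nn_def using apos by (simp add: ceiling_le_zero not_le less_imp_le)
          have l: "a powr \<alpha> * real (Suc k) \<le> real (nn k)" unfolding r by linarith
          have u: "real (nn k) \<le> a powr \<alpha> * real (Suc k) + 1" unfolding r by linarith
          have "a powr \<alpha> \<le> q k" unfolding q_def using l by (simp add: field_simps)
          moreover have "q k \<le> a powr \<alpha> + inverse (real (Suc k))"
          proof -
            have "q k \<le> (a powr \<alpha> * real (Suc k) + 1) / real (Suc k)"
              unfolding q_def using u by (intro divide_right_mono) auto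
            also have "\<dots> = a powr \<alpha> + inverse (real (Suc k))"
              by (simp add: field_simps del: of_nat_Suc)
            finally show ?thesis .
          qed
          ultimately show ?thesis by simp
        qed
        have qlim: "q \<longlonglongrightarrow> a powr \<alpha>"
        proof (rule tendsto_sandwich[of "\<lambda>_. a powr \<alpha>" q _ "\<lambda>k. a powr \<alpha> + inverse (real (Suc k))"])
          show "\<forall>\<^sub>F n in sequentially. a powr \<alpha> \<le> q n" using qb by simp
          show "\<forall>\<^sub>F n in sequentially. q n \<le> a powr \<alpha> + inverse (real (Suc n))" using qb by simp
          show "(\<lambda>_. a powr \<alpha>) \<longlonglongrightarrow> a powr \<alpha>" by simp
          show "(\<lambda>k. a powr \<alpha> + inverse (real (Suc k))) \<longlonglongrightarrow> a powr \<alpha>"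
            using tendsto_add[OF tendsto_const LIMSEQ_inverse_real_of_nat, of "a powr \<alpha>"] by simp
        qed
        have l1: "(\<lambda>k. q k powr (1/\<alpha>)) \<longlonglongrightarrow> a"
        proof -
          have "(\<lambda>k. q k powr (1/\<alpha>)) \<longlonglongrightarrow> (a powr \<alpha>) powr (1/\<alpha>)"
            using apos by (intro tendsto_powr qlim tendsto_const) auto
          also have "(a powr \<alpha>) powr (1/\<alpha>) = a" using al a by (simp add: powr_powr)
          finally show ?thesis .
        qed
        have l2: "(\<lambda>k. q k powr (1/\<beta>)) \<longlonglongrightarrow> a powr (\<alpha>/\<beta>)"
        proof -
          have "(\<lambda>k. q k powr (1/\<beta>)) \<longlonglongrightarrow> (a powr \<alpha>) powr (1/\<beta>)"
            using apos by (intro tendsto_powr qlim tendsto_const) auto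
          also have "(a powr \<alpha>) powr (1/\<beta>) = a powr (\<alpha>/\<beta>)" by (simp add: powr_powr)
          finally show ?thesis .
        qed
        have T0: "\<And>t. t \<in> T \<Longrightarrow> t \<ge> 0" using T by auto
        show "fdd M (\<lambda>t \<omega>. X (a * t) \<omega>) T = fdd M (\<lambda>t \<omega>. a powr (\<alpha> / \<beta>) *\<^sub>R X t \<omega>) T"
        proof (rule limit_law[OF P P conjunct1[OF T], where V="\<lambda>k t \<omega>. X (q k powr (1/\<alpha>) * t) \<omega>"
              and W="\<lambda>k t \<omega>. q k powr (1/\<beta>) *\<^sub>R X t \<omega>"])
          show "\<And>k t. t \<in> T \<Longrightarrow> (\<lambda>\<omega>. X (q k powr (1/\<alpha>) * t) \<omega>) \<in> borel_measurable M"
            using mXs T0 by simp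
          show "\<And>t. t \<in> T \<Longrightarrow> (\<lambda>\<omega>. X (a * t) \<omega>) \<in> borel_measurable M"
            using mXs T0 a by simp
          show "\<And>k t. t \<in> T \<Longrightarrow> (\<lambda>\<omega>. q k powr (1/\<beta>) *\<^sub>R X t \<omega>) \<in> borel_measurable M"
            using mXr T0 by simp
          show "\<And>t. t \<in> T \<Longrightarrow> (\<lambda>\<omega>. a powr (\<alpha>/\<beta>) *\<^sub>R X t \<omega>) \<in> borel_measurable M"
            using mXr T0 by simp
          show "\<And>t e. t \<in> T \<Longrightarrow> e > 0 \<Longrightarrow> (\<lambda>k. measure M {\<omega>\<in>space M. dist (q k powr (1/\<beta>) *\<^sub>R X t \<omega>) (a powr (\<alpha>/\<beta>) *\<^sub>R X t \<omega>) > e}) \<longlonglongrightarrow> 0"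
            using tight_scale[OF P mX l2] T0 by simp
          show "fdd M (\<lambda>t \<omega>. X (q k powr (1/\<alpha>) * t) \<omega>) T = fdd M (\<lambda>t \<omega>. q k powr (1/\<beta>) *\<^sub>R X t \<omega>) T" for k
            using Q[OF nn1 [of k], of "Suc k"] T unfolding same_law_def q_def by auto
          fix t e assume t: "t \<in> T" and e: "(e::real) > 0"
          define g where "g s = measure M {\<omega>\<in>space M. dist (X s \<omega>) (X (a * t) \<omega>) > e}" for s
          have at0: "a * t \<ge> 0" using a T0[OF t] by simp
          have "(g \<longlongrightarrow> 0) (at (a * t) within {0..})"
            using assms(5) at0 e unfolding stoch_continuous_def g_def by auto
          moreover have "g (a * t) = 0" unfolding g_def using e by simp
          ultimately have "continuous (at (a * t) within {0..}) g"
            unfolding continuous_within by simp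
          then have cs: "\<And>x. (\<forall>n. x n \<in> {0..}) \<and> x \<longlonglongrightarrow> a * t \<Longrightarrow> (g \<circ> x) \<longlonglongrightarrow> g (a * t)"
            unfolding continuous_within_sequentially by blast
          have "(g \<circ> (\<lambda>k. q k powr (1/\<alpha>) * t)) \<longlonglongrightarrow> g (a * t)"
            using T0[OF t] by (intro cs conjI allI tendsto_mult[OF l1 tendsto_const]) auto
          then show "(\<lambda>k. measure M {\<omega>\<in>space M. dist (X (q k powr (1/\<alpha>) * t) \<omega>) (X (a * t) \<omega>) > e}) \<longlonglongrightarrow> 0"
            using \<open>g (a * t) = 0\<close> unfolding g_def comp_def by simp
        qed
      qed
    qed
  next
    assume ss: "selfsimilar (\<alpha> / \<beta>) M X"
    show "strictly_stable \<beta> M X" unfolding strictly_stable_def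
    proof (intro allI impI)
      fix n :: nat assume n: "n \<ge> 1"
      have 1: "same_law (copies_space M n) (copies_sum X n) M (\<lambda>t \<omega>. X (real n powr (1/\<alpha>) * t) \<omega>)"
        by (rule same_law_sym[OF IDTn[OF n]])
      have pos: "real n powr (1/\<alpha>) > 0" using n by simp
      have 2: "same_law M (\<lambda>t \<omega>. X (real n powr (1/\<alpha>) * t) \<omega>) M (\<lambda>t \<omega>. (real n powr (1/\<alpha>)) powr (\<alpha>/\<beta>) *\<^sub>R X t \<omega>)"
        using ss pos unfolding selfsimilar_def by blast
      have "(real n powr (1/\<alpha>)) powr (\<alpha>/\<beta>) = real n powr (1/\<beta>)"
        using al by (simp add: powr_powr)
      with 1 2 show "same_law (copies_space M n) (copies_sum X n) M (\<lambda>t \<omega>. real n powr (1/\<beta>) *\<^sub>R X t \<omega>)"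
        using same_law_trans by metis
    qed
  qed
qed

end
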